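(* For every input sequence of requests $\sigma$ of the List Update with Time Windows problem, the algorithm ALG described in the context satisfies $$ALG(\sigma)\le 24\cdot OPT(\sigma).$$
   Context: List Update with Time Windows. A set $\mathbb{E}$ of $n$ elements is kept in an ordered list (position $1$ is the head). An input $\sigma$ is a sequence of requests $r_1,\dots,r_m$; request $r_k$ specifies an element $e_k\in\mathbb{E}$, an arrival time $a_k$ and a deadline $q_k\ge a_k$. At any time an algorithm may (a) perform an access up to position $i$, at cost $i$, which serves every pending request (arrived and not yet served) whose element currently lies in positions $1,\dots,i$; (b) swap two adjacent elements of its list at cost $1$. Actions are instantaneous (time does not advance). Every request $r_k$ must be served at some time in $[a_k,q_k]$. The cost of an algorithm on $\sigma$ is the total access cost plus the number of swaps. An online algorithm knows at time $t$ only the requests that have arrived by time $t$. $OPT(\sigma)$ denotes the minimum cost of an (offline) feasible solution; the online algorithm and $OPT$ start from the same initial list. Algorithm ALG: whenever the current time equals the deadline of at least one pending request, let the triggering element be the element at the largest current position among those elements having a pending request whose deadline is the current time, and let $i$ be its position. ALG accesses the first $\min(2i-1,n)$ positions (serving all pending requests for elements in them) and then moves the triggering element to the front of its list by $i-1$ adjacent swaps. *)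

theory Defs
  imports Complex_Main
begin

text \<open>List Update with Time Windows.  Lists are Isabelle lists (head = position 1),
  times are reals.\<close>

record 'a request =
  elem :: 'a
  arr  :: real
  dl   :: real

definition pos :: "'a list \<Rightarrow> 'a \<Rightarrow> nat" where
  "pos L x = length (takeWhile (\<lambda>y. y \<noteq> x) L) + 1"

definition move_to_front :: "'a \<Rightarrow> 'a list \<Rightarrow> 'a list" where
  "move_to_front x L = x # removeAll x L"

datatype action = Access nat | Swap nat
  \<comment> \<open>Access i: access up to position i (cost i);
      Swap j: swap the elements at positions j and j+1 (cost 1)\<close>

fun action_cost :: "action \<Rightarrow> nat" where
  "action_cost (Access i) = i"
| "action_cost (Swap j) = 1"

fun valid_action :: "nat \<Rightarrow> action \<Rightarrow> bool" where
  "valid_action n (Access i) = (1 \<le> i \<and> i \<le> n)"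
| "valid_action n (Swap j) = (1 \<le> j \<and> j < n)"

fun apply_action :: "'a list \<Rightarrow> action \<Rightarrow> 'a list" where
  "apply_action L (Access i) = L"
| "apply_action L (Swap j) = L[j - 1 := L ! j, j := L ! (j - 1)]"

type_synonym schedule = "(real \<times> action) list"

text \<open>List state just before the j-th event (0-based) of the schedule.\<close>
definition state_before :: "'a list \<Rightarrow> schedule \<Rightarrow> nat \<Rightarrow> 'a list" where
  "state_before L0 S j = foldl apply_action L0 (map snd (take j S))"

definition sched_cost :: "schedule \<Rightarrow> nat" where
  "sched_cost S = sum_list (map (action_cost \<circ> snd) S)"

text \<open>Request k is served by event j if event j is an access up to position i,
  happening in the time window of the request, with the requested element
  in positions 1..i at that moment.  (A request is then served at its first
  covering access after arrival, which lies within its window.)\<close>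
definition feasible :: "'a list \<Rightarrow> 'a request list \<Rightarrow> schedule \<Rightarrow> bool" where
  "feasible L0 rs S \<longleftrightarrow>
     sorted (map fst S) \<and>
     (\<forall>ev \<in> set S. valid_action (length L0) (snd ev)) \<and>
     (\<forall>k < length rs. \<exists>j < length S. \<exists>i.
         snd (S ! j) = Access i \<and>
         arr (rs ! k) \<le> fst (S ! j) \<and> fst (S ! j) \<le> dl (rs ! k) \<and>
         pos (state_before L0 S j) (elem (rs ! k)) \<le> i)"

definition OPT :: "'a list \<Rightarrow> 'a request list \<Rightarrow> nat" where
  "OPT L0 rs = Inf {sched_cost S | S. feasible L0 rs S}"

text \<open>State: current list, set of indices of served requests, accumulated cost.
  ALG acts only at deadline times, processed in increasing order.\<close>
definition alg_step :: "'a request list \<Rightarrow> 'a list \<times> nat set \<times> nat \<Rightarrow> real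
                          \<Rightarrow> 'a list \<times> nat set \<times> nat" where
  "alg_step rs st t =
    (let (L, served, c) = st;
         P = {k. k < length rs \<and> k \<notin> served \<and> arr (rs ! k) \<le> t};
         T = {k \<in> P. dl (rs ! k) = t}
     in if T = {} then st
        else let i = Max ((\<lambda>k. pos L (elem (rs ! k))) ` T);
                 x = L ! (i - 1);
                 j = min (2 * i - 1) (length L)
             in (move_to_front x L,
                 served \<union> {k \<in> P. pos L (elem (rs ! k)) \<le> j},
                 c + j + (i - 1)))"

definition deadlines :: "'a request list \<Rightarrow> real list" where
  "deadlines rs = sorted_list_of_set (dl ` set rs)"

definition ALG :: "'a list \<Rightarrow> 'a request list \<Rightarrow> nat" where
  "ALG L0 rs = snd (snd (foldl (alg_step rs) (L0, {}, 0) (deadlines rs)))"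

end

theory Submission
  imports Defs
begin

lemma pos_Cons: "pos (a#L) y = (if a = y then 1 else Suc (pos L y))"
  by (simp add: pos_def)

lemma pos_ge1: "1 \<le> pos L y" by (simp add: pos_def)
lemma pos_gt0[simp]: "0 < pos L y" by (simp add: pos_def)
lemma pos_Nil[simp]: "pos [] y = 1" by (simp add: pos_def)

lemma pos_le: "y \<in> set L \<Longrightarrow> pos L y \<le> length L"
  by (induction L) (auto simp: pos_Cons)

lemma nth_pos: "y \<in> set L \<Longrightarrow> L ! (pos L y - 1) = y"
  by (induction L) (auto simp: pos_Cons nth_Cons')

lemma pos_nth: "distinct L \<Longrightarrow> k < length L \<Longrightarrow> pos L (L!k) = Suc k"
  by (induction L arbitrary: k) (auto simp: pos_Cons nth_Cons' split: nat.splits)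

lemma pos_notin: "y \<notin> set L \<Longrightarrow> pos L y = Suc (length L)"
  by (induction L) (auto simp: pos_Cons)

lemma pos_inj: "y \<in> set L \<Longrightarrow> z \<in> set L \<Longrightarrow> pos L y = pos L z \<Longrightarrow> y = z"
  by (metis nth_pos)

lemma pos_removeAll: "distinct L \<Longrightarrow> y \<noteq> x \<Longrightarrow> x \<in> set L \<Longrightarrow> y \<in> set L \<Longrightarrow>
   pos (removeAll x L) y = (if pos L x < pos L y then pos L y - 1 else pos L y)"
proof (induction L)
  case Nil then show ?case by simp
next
  case (Cons a L)
  show ?case
  proof (cases "a = x")
    case True
    then have "x \<notin> set L" using Cons by auto
    then have "removeAll x L = L" by simp
    then show ?thesis using True Cons.prems by (simp add: pos_Cons pos_ge1 Suc_le_eq)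
  next
    case False
    then show ?thesis using Cons by (auto simp: pos_Cons pos_ge1)
  qed
qed

lemma pos_mtf: "distinct L \<Longrightarrow> y \<noteq> x \<Longrightarrow> x \<in> set L \<Longrightarrow> y \<in> set L \<Longrightarrow>
   pos (move_to_front x L) y = (if pos L y < pos L x then pos L y + 1 else pos L y)"
  using pos_removeAll[of L y x] pos_inj[of x L y] pos_ge1[of L y]
  by (auto simp: move_to_front_def pos_Cons)

lemma pos_mtf_self: "pos (move_to_front x L) x = 1"
  by (simp add: move_to_front_def pos_Cons)

lemma set_mtf: "x \<in> set L \<Longrightarrow> set (move_to_front x L) = set L"
  by (auto simp: move_to_front_def)

lemma distinct_mtf: "distinct L \<Longrightarrow> distinct (move_to_front x L)"
  by (simp add: move_to_front_def distinct_removeAll)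

lemma length_mtf: "distinct L \<Longrightarrow> x \<in> set L \<Longrightarrow> length (move_to_front x L) = length L"
  by (metis distinct_card distinct_mtf set_mtf)

lemma pos_mtf_ge: "distinct L \<Longrightarrow> y \<noteq> x \<Longrightarrow> x \<in> set L \<Longrightarrow> y \<in> set L \<Longrightarrow>
   pos L y \<le> pos (move_to_front x L) y"
  by (simp add: pos_mtf)

definition swp :: "'a list \<Rightarrow> nat \<Rightarrow> 'a list" where
  "swp M j = M[j - 1 := M ! j, j := M ! (j - 1)]"

lemma pos_swp: assumes "distinct M" "1 \<le> j" "j < length M" "w \<in> set M"
  shows "pos (swp M j) w = (if w = M!(j-1) then j+1 else if w = M!j then j else pos M w)"
proof -
  have d: "distinct (swp M j)" using assms by (simp add: swp_def distinct_swap)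
  have l: "length (swp M j) = length M" by (simp add: swp_def)
  define k where "k = pos M w - 1"
  have k: "k < length M" "M!k = w" using assms pos_le[of w M] pos_ge1[of M w] nth_pos[of w M]
    by (auto simp: k_def)
  have pk: "pos M w = Suc k" using k assms pos_nth by metis
  show ?thesis
  proof (cases "k = j - 1")
    case True
    have "swp M j ! j = w" using True k assms by (simp add: swp_def)
    then have "pos (swp M j) w = Suc j" using pos_nth[OF d] assms l by metis
    then show ?thesis using True k by auto
  next
    case False
    show ?thesis
    proof (cases "k = j")
      case True
      have "swp M j ! (j-1) = w" using True k assms by (simp add: swp_def nth_list_update)
      then have "pos (swp M j) w = Suc (j-1)" using pos_nth[OF d, of "j-1"] assms l by auto
      then show ?thesis using True k False assms nth_eq_iff_index_eq[OF assms(1)]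
        by auto
    next
      case F2: False
      have "swp M j ! k = w" using False F2 k assms by (simp add: swp_def nth_list_update)
      then have "pos (swp M j) w = Suc k" using pos_nth[OF d, of k] k l by auto
      moreover have "w \<noteq> M!(j-1)" "w \<noteq> M!j" using k False F2 assms nth_eq_iff_index_eq[OF assms(1)]
        by auto
      ultimately show ?thesis using pk by auto
    qed
  qed
qed

definition Inv :: "'a list \<Rightarrow> 'a list \<Rightarrow> ('a \<times> 'a) set" where
  "Inv L M = {(y,z). y \<in> set L \<and> z \<in> set L \<and> pos L y < pos L z \<and> pos M z < pos M y}"

definition ninv :: "'a list \<Rightarrow> 'a list \<Rightarrow> nat" where
  "ninv L M = card (Inv L M)"

lemma finite_Inv: "finite (Inv L M)"
proof -
  have "Inv L M \<subseteq> set L \<times> set L" by (auto simp: Inv_def)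
  then show ?thesis by (rule finite_subset) auto
qed

lemma inv_self: "ninv L L = 0"
proof -
  have "Inv L L = {}" by (auto simp: Inv_def)
  then show ?thesis by (simp add: ninv_def)
qed

lemma card2_le: "card {x, y} \<le> 2"
  by (cases "x = y") auto

lemma inv_swp: assumes "distinct M" "1 \<le> j" "j < length M" "set M = set L"
  shows "ninv L (swp M j) \<le> ninv L M + 2"
proof -
  let ?a = "M!(j-1)" and ?b = "M!j"
  have ab: "?a \<noteq> ?b" using nth_eq_iff_index_eq[OF assms(1), of "j-1" j] assms(2,3) by simp
  have pa: "pos M ?a = j" using pos_nth[OF assms(1), of "j-1"] assms(2,3) by simp
  have pb: "pos M ?b = j+1" using pos_nth[OF assms(1), of "j"] assms(2,3) by simp
  have inA: "?a \<in> set M" "?b \<in> set M" using assms(2,3) by simp_all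
  have sub: "Inv L (swp M j) \<subseteq> Inv L M \<union> {(?a,?b),(?b,?a)}"
  proof
    fix p assume p: "p \<in> Inv L (swp M j)"
    obtain y z where yz: "p = (y,z)" by force
    have y: "y \<in> set M" and z: "z \<in> set M" and lt: "pos L y < pos L z"
      and lt2: "pos (swp M j) z < pos (swp M j) y"
      using p yz assms(4) by (auto simp: Inv_def)
    have yz_ne: "y \<noteq> z" using lt by auto
    have py: "pos M y \<noteq> j \<or> y = ?a" using pa pos_inj[OF y inA(1)] by auto
    have pz: "pos M z \<noteq> j \<or> z = ?a" using pa pos_inj[OF z inA(1)] by auto
    have py2: "pos M y \<noteq> j+1 \<or> y = ?b" using pb pos_inj[OF y inA(2)] by auto
    have pz2: "pos M z \<noteq> j+1 \<or> z = ?b" using pb pos_inj[OF z inA(2)] by auto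
    have ne: "pos M y \<noteq> pos M z" using pos_inj[OF y z] yz_ne by auto
    show "p \<in> Inv L M \<union> {(?a,?b),(?b,?a)}"
    proof (cases "(y = ?a \<and> z = ?b) \<or> (y = ?b \<and> z = ?a)")
      case True then show ?thesis using yz by auto
    next
      case False
      have sy: "pos (swp M j) y = (if y = ?a then j+1 else if y = ?b then j else pos M y)"
        by (rule pos_swp[OF assms(1-3) y])
      have sz: "pos (swp M j) z = (if z = ?a then j+1 else if z = ?b then j else pos M z)"
        by (rule pos_swp[OF assms(1-3) z])
      have "pos M z < pos M y"
      proof (cases "y = ?a")
        case ya: True
        then have zn: "z \<noteq> ?b" "z \<noteq> ?a" using False yz_ne by auto
        have "pos (swp M j) y = j+1" using sy ya by simp
        moreover have "pos (swp M j) z = pos M z" using sz zn by simp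
        moreover have "pos M y = j" using ya pa by simp
        ultimately show ?thesis using lt2 pz zn by auto
      next
        case yna: False
        show ?thesis
        proof (cases "y = ?b")
          case yb: True
          then have zn: "z \<noteq> ?b" "z \<noteq> ?a" using False yz_ne by auto
          have "pos (swp M j) y = j" using sy yb yna by simp
          moreover have "pos (swp M j) z = pos M z" using sz zn by simp
          moreover have "pos M y = j+1" using yb pb by simp
          ultimately show ?thesis using lt2 pz2 zn by auto
        next
          case ynb: False
          have e1: "pos (swp M j) y = pos M y" using sy yna ynb by simp
          have "pos M y \<noteq> j" "pos M y \<noteq> j+1" using py py2 yna ynb by auto
          show ?thesis
          proof (cases "z = ?a")
            case True
            then show ?thesis using sz e1 lt2 pa \<open>pos M y \<noteq> j\<close> by simp
          next
            case F: False
            show ?thesis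
            proof (cases "z = ?b")
              case True
              then show ?thesis using sz e1 lt2 pb F \<open>pos M y \<noteq> j+1\<close> ab by simp
            next
              case False
              then show ?thesis using sz e1 lt2 F by simp
            qed
          qed
        qed
      qed
      then show ?thesis using p yz assms(4) by (auto simp: Inv_def)
    qed
  qed
  have "ninv L (swp M j) \<le> card (Inv L M \<union> {(?a,?b),(?b,?a)})"
    unfolding ninv_def by (rule card_mono) (use finite_Inv sub in auto)
  also have "\<dots> \<le> card (Inv L M) + card {(?a,?b),(?b,?a)}" by (rule card_Un_le)
  also have "\<dots> \<le> ninv L M + 2" unfolding ninv_def using card2_le by (rule add_left_mono)
  finally show ?thesis .
qed

lemma card_pos_less: assumes "distinct L" "c \<le> Suc (length L)"
  shows "card {y \<in> set L. pos L y < c} = c - 1"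
proof -
  have eq: "{y \<in> set L. pos L y < c} = (\<lambda>k. L!k) ` {..<c - 1}"
  proof (rule set_eqI, rule iffI)
    fix y assume "y \<in> {y \<in> set L. pos L y < c}"
    then have y: "y \<in> set L" "pos L y < c" by auto
    have "L ! (pos L y - 1) = y" using nth_pos[OF y(1)] .
    moreover have "pos L y - 1 < c - 1" using y(2) pos_ge1[of L y] by linarith
    ultimately show "y \<in> (\<lambda>k. L!k) ` {..<c - 1}" by force
  next
    fix y assume "y \<in> (\<lambda>k. L!k) ` {..<c - 1}"
    then obtain k where k: "k < c - 1" "y = L!k" by auto
    have kl: "k < length L" using k assms(2) by linarith
    have "pos L y = Suc k" using pos_nth[OF assms(1) kl] k by simp
    then show "y \<in> {y \<in> set L. pos L y < c}" using k kl by auto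
  qed
  have inj: "inj_on (\<lambda>k. L!k) {..<c - 1}"
    using assms by (auto simp: inj_on_def nth_eq_iff_index_eq)
  show ?thesis unfolding eq using card_image[OF inj] by simp
qed

lemma mtf_inv:
  assumes dL: "distinct L" and dM: "distinct M" and sLM: "set M = set L" and x: "x \<in> set L"
  shows "\<exists>k. k \<le> pos L x - 1 \<and> k \<le> pos M x - 1 \<and>
           ninv (move_to_front x L) M + (pos L x - 1) = ninv L M + 2 * k"
proof -
  define L' where "L' = move_to_front x L"
  define A where "A = {y \<in> set L. pos L y < pos L x}"
  define B where "B = {y \<in> set L. pos M y < pos M x}"
  define N where "N = {(y,z) \<in> Inv L M. y \<noteq> x \<and> z \<noteq> x}"
  have xM: "x \<in> set M" using x sLM by simp
  have cA: "card A = pos L x - 1" unfolding A_def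
    by (rule card_pos_less[OF dL]) (use pos_le[OF x] in simp)
  have cB: "card B = pos M x - 1" unfolding B_def sLM[symmetric]
    by (rule card_pos_less[OF dM]) (use pos_le[OF xM] in simp)
  have fA: "finite A" "finite B" by (auto simp: A_def B_def)
  have sL': "set L' = set L" using set_mtf[OF x] by (simp add: L'_def)
  have px': "pos L' x = 1" by (simp add: L'_def pos_mtf_self)
  have pL': "y \<in> set L \<Longrightarrow> y \<noteq> x \<Longrightarrow> pos L' y = (if pos L y < pos L x then pos L y + 1 else pos L y)" for y
    using pos_mtf[OF dL _ x] by (simp add: L'_def)
  have pLne: "y \<in> set L \<Longrightarrow> y \<noteq> x \<Longrightarrow> pos L y \<noteq> pos L x" for y
    using pos_inj[OF _ x] by blast
  have pMne: "y \<in> set L \<Longrightarrow> y \<noteq> x \<Longrightarrow> pos M y \<noteq> pos M x" for y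
    using pos_inj[OF _ xM] sLM by blast
  have rel: "y \<in> set L \<Longrightarrow> z \<in> set L \<Longrightarrow> y \<noteq> x \<Longrightarrow> z \<noteq> x \<Longrightarrow>
      (pos L' y < pos L' z) = (pos L y < pos L z)" for y z
    using pL'[of y] pL'[of z] pLne[of y] pLne[of z] by auto
  have e1: "Inv L M = N \<union> ((\<lambda>y. (y,x)) ` (A - B) \<union> (\<lambda>z. (x,z)) ` (B - A))"
  proof (rule set_eqI)
    fix p :: "'a \<times> 'a"
    obtain y z where p: "p = (y,z)" by force
    show "p \<in> Inv L M \<longleftrightarrow> p \<in> N \<union> ((\<lambda>y. (y,x)) ` (A - B) \<union> (\<lambda>z. (x,z)) ` (B - A))"
      unfolding p using pLne pMne x
      by (auto simp: N_def A_def B_def Inv_def; metis linorder_neqE_nat less_irrefl)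
  qed
  have e2: "Inv L' M = N \<union> (\<lambda>z. (x,z)) ` B"
  proof (rule set_eqI)
    fix p :: "'a \<times> 'a"
    obtain y z where p: "p = (y,z)" by force
    have "(y,z) \<in> Inv L' M \<longleftrightarrow> (y,z) \<in> N \<union> (\<lambda>z. (x,z)) ` B"
    proof (cases "y = x")
      case True
      have gt: "1 < pos L' z" if "z \<in> set L" "z \<noteq> x"
      proof (cases "pos L z < pos L x")
        case True then show ?thesis using pL'[OF that] pos_ge1[of L z] by simp
      next
        case False then show ?thesis using pL'[OF that] pLne[OF that] pos_ge1[of L x] by simp
      qed
      show ?thesis using True px' gt x
        by (auto simp: N_def B_def Inv_def sL')
    next
      case False
      then show ?thesis
      proof (cases "z = x")
        case True
        then show ?thesis using px' False pos_ge1[of L' y] by (auto simp: N_def B_def Inv_def sL')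
      next
        case F2: False
        then show ?thesis using False rel[of y z] by (auto simp: N_def B_def Inv_def sL')
      qed
    qed
    then show "p \<in> Inv L' M \<longleftrightarrow> p \<in> N \<union> (\<lambda>z. (x,z)) ` B" using p by simp
  qed
  have fN: "finite N" using finite_Inv[of L M] by (rule rev_finite_subset) (auto simp: N_def)
  have c1: "ninv L M = card N + card (A - B) + card (B - A)"
  proof -
    have d1: "N \<inter> ((\<lambda>y. (y,x)) ` (A - B) \<union> (\<lambda>z. (x,z)) ` (B - A)) = {}"
      by (auto simp: N_def)
    have d2: "(\<lambda>y. (y,x)) ` (A - B) \<inter> (\<lambda>z. (x,z)) ` (B - A) = {}"
      by (auto simp: A_def)
    have i1: "card ((\<lambda>y. (y,x)) ` (A - B)) = card (A - B)"
      by (rule card_image) (auto simp: inj_on_def)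
    have i2: "card ((\<lambda>z. (x,z)) ` (B - A)) = card (B - A)"
      by (rule card_image) (auto simp: inj_on_def)
    show ?thesis unfolding ninv_def e1
      using card_Un_disjoint[OF fN _ d1] card_Un_disjoint[OF _ _ d2] i1 i2 fA by simp
  qed
  have c2: "ninv L' M = card N + card B"
  proof -
    have d1: "N \<inter> (\<lambda>z. (x,z)) ` B = {}" by (auto simp: N_def)
    have i2: "card ((\<lambda>z. (x,z)) ` B) = card B"
      by (rule card_image) (auto simp: inj_on_def)
    show ?thesis unfolding ninv_def e2 using card_Un_disjoint[OF fN _ d1] i2 fA by simp
  qed
  define k where "k = card (A \<inter> B)"
  have kA: "k \<le> card A" "k \<le> card B" unfolding k_def using fA by (auto intro: card_mono)
  have dA: "card (A - B) = card A - k" unfolding k_def using fA by (simp add: card_Diff_subset_Int)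
  have dB: "card (B - A) = card B - k" unfolding k_def using fA
    by (simp add: card_Diff_subset_Int Int_commute)
  have "ninv L' M + (pos L x - 1) = ninv L M + 2 * k"
    using kA dA dB c1 c2 cA cB pos_ge1[of L x] pos_ge1[of M x] by arith
  moreover have "k \<le> pos L x - 1" "k \<le> pos M x - 1" using kA cA cB by auto
  ultimately show ?thesis unfolding L'_def by blast
qed

definition hh :: "real \<Rightarrow> real \<Rightarrow> real" where
  "hh d i = min (8*i) (10*d - 2*i)"

definition Sb :: "real \<Rightarrow> real \<Rightarrow> real" where
  "Sb d y = min (min (16*y) (10*d + 6*y)) (min (20*d + y) (24*d))"

lemma Sb_nonneg: "0 \<le> d \<Longrightarrow> 0 \<le> y \<Longrightarrow> 0 \<le> Sb d y"
  by (simp add: Sb_def)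

lemma Sb_mono: "y \<le> y' \<Longrightarrow> Sb d y \<le> Sb d y'"
  unfolding Sb_def by (intro min.mono) auto

lemma Sb_le24: "Sb d y \<le> 24 * d" by (simp add: Sb_def)

lemma hh_step: assumes "0 \<le> d" "0 \<le> m" shows "hh d m + Sb d (m/2) \<le> Sb d m"
proof -
  have h1: "hh d m \<le> 8*m" "hh d m \<le> 10*d - 2*m" by (auto simp: hh_def)
  have s1: "Sb d (m/2) \<le> 8*m" "Sb d (m/2) \<le> 10*d + 3*m" "Sb d (m/2) \<le> 20*d + m/2"
    by (auto simp: Sb_def)
  have "hh d m + Sb d (m/2) \<le> 16*m" using h1 s1 by linarith
  moreover have "hh d m + Sb d (m/2) \<le> 10*d + 6*m" using h1 s1 by linarith
  moreover have "hh d m + Sb d (m/2) \<le> 20*d + m" using h1 s1 by linarith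
  moreover have "hh d m + Sb d (m/2) \<le> 24*d"
  proof (cases "m \<ge> 4*d")
    case True then show ?thesis using h1 s1 by linarith
  next
    case False then show ?thesis using h1 s1 by linarith
  qed
  ultimately show ?thesis unfolding Sb_def by simp
qed

lemma doubling_sum:
  fixes E :: "nat set" and I :: "nat \<Rightarrow> real"
  assumes "finite E" "\<And>e e'. e \<in> E \<Longrightarrow> e' \<in> E \<Longrightarrow> e < e' \<Longrightarrow> 2 * I e \<le> I e'"
    "\<And>e. e \<in> E \<Longrightarrow> 0 \<le> I e" "\<And>e. e \<in> E \<Longrightarrow> I e \<le> y" "0 \<le> y" "0 \<le> d"
  shows "(\<Sum>e\<in>E. hh d (I e)) \<le> Sb d y"
  using assms
proof (induction "card E" arbitrary: E y)
  case 0
  then have "E = {}" by simp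
  then show ?case using Sb_nonneg[OF 0(7,6)] by simp
next
  case (Suc c)
  then have ne: "E \<noteq> {}" by auto
  define e0 where "e0 = Max E"
  have e0: "e0 \<in> E" using Max_in[OF Suc(3) ne] by (simp add: e0_def)
  define E' where "E' = E - {e0}"
  have cE': "c = card E'" using Suc(2) e0 Suc(3) by (simp add: E'_def)
  have lt: "e \<in> E' \<Longrightarrow> e < e0" for e
    using Max_ge[OF Suc(3)] e0_def by (fastforce simp: E'_def)
  have IH: "(\<Sum>e\<in>E'. hh d (I e)) \<le> Sb d (I e0 / 2)"
  proof (rule Suc(1)[OF cE'])
    show "finite E'" using Suc(3) by (simp add: E'_def)
    show "\<And>e e'. e \<in> E' \<Longrightarrow> e' \<in> E' \<Longrightarrow> e < e' \<Longrightarrow> 2 * I e \<le> I e'"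
      using Suc(4) by (auto simp: E'_def)
    show "\<And>e. e \<in> E' \<Longrightarrow> 0 \<le> I e" using Suc(5) by (auto simp: E'_def)
    show "\<And>e. e \<in> E' \<Longrightarrow> I e \<le> I e0 / 2"
    proof -
      fix e assume "e \<in> E'"
      then have "2 * I e \<le> I e0" using Suc(4)[of e e0] lt e0 by (auto simp: E'_def)
      then show "I e \<le> I e0 / 2" by simp
    qed
    show "0 \<le> I e0 / 2" using Suc(5)[OF e0] by simp
    show "0 \<le> d" by fact
  qed
  have "(\<Sum>e\<in>E. hh d (I e)) = hh d (I e0) + (\<Sum>e\<in>E'. hh d (I e))"
    unfolding E'_def using Suc(3) e0 by (simp add: sum.remove)
  also have "\<dots> \<le> hh d (I e0) + Sb d (I e0 / 2)" using IH by simp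
  also have "\<dots> \<le> Sb d (I e0)" using hh_step Suc(5)[OF e0] Suc(8) by blast
  also have "\<dots> \<le> Sb d y" using Sb_mono Suc(6)[OF e0] by blast
  finally show ?case .
qed

definition Pset :: "'a request list \<Rightarrow> nat set \<Rightarrow> real \<Rightarrow> nat set" where
  "Pset rs sv t = {k. k < length rs \<and> k \<notin> sv \<and> arr (rs ! k) \<le> t}"
definition Tset :: "'a request list \<Rightarrow> nat set \<Rightarrow> real \<Rightarrow> nat set" where
  "Tset rs sv t = {k \<in> Pset rs sv t. dl (rs ! k) = t}"
definition Ival :: "'a request list \<Rightarrow> 'a list \<Rightarrow> nat set \<Rightarrow> real \<Rightarrow> nat" where
  "Ival rs L sv t = Max ((\<lambda>k. pos L (elem (rs ! k))) ` Tset rs sv t)"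
definition Jval :: "'a list \<Rightarrow> nat \<Rightarrow> nat" where
  "Jval L i = min (2 * i - 1) (length L)"

lemma alg_step_simp: "alg_step rs (L, sv, c) t = (if Tset rs sv t = {} then (L, sv, c) else
   (move_to_front (L ! (Ival rs L sv t - 1)) L,
    sv \<union> {k \<in> Pset rs sv t. pos L (elem (rs!k)) \<le> Jval L (Ival rs L sv t)},
    c + Jval L (Ival rs L sv t) + (Ival rs L sv t - 1)))"
  unfolding alg_step_def Let_def case_prod_conv
  unfolding Pset_def[symmetric] Tset_def[symmetric] Ival_def[symmetric] Jval_def[symmetric]
  by (rule refl)

locale setting =
  fixes L0 :: "'a list" and rs :: "'a request list"
  assumes dL0: "distinct L0" and rsok: "\<forall>r \<in> set rs. elem r \<in> set L0 \<and> arr r \<le> dl r"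
begin

definition "DD = deadlines rs"
definition "ND = length DD"
definition "tt e = DD ! e"
definition "st e = foldl (alg_step rs) (L0, {}, 0) (take e DD)"
definition "Lst e = fst (st e)"
definition "Sv e = fst (snd (st e))"
definition "Cst e = snd (snd (st e))"
definition "trig e \<longleftrightarrow> Tset rs (Sv e) (tt e) \<noteq> {}"
definition "II e = Ival rs (Lst e) (Sv e) (tt e)"
definition "X e = Lst e ! (II e - 1)"
definition "JJ e = Jval (Lst e) (II e)"
definition "kk e = (SOME k. k \<in> Tset rs (Sv e) (tt e) \<and> pos (Lst e) (elem (rs!k)) = II e)"

lemma elem_in: "k < length rs \<Longrightarrow> elem (rs!k) \<in> set L0"
  using rsok nth_mem by blast

lemma ALG_eq: "ALG L0 rs = Cst ND"
  by (simp add: ALG_def Cst_def st_def ND_def DD_def)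

lemma st0: "st 0 = (L0, {}, 0)" by (simp add: st_def)

lemma st_Suc: "e < ND \<Longrightarrow> st (Suc e) = alg_step rs (st e) (tt e)"
  by (simp add: st_def ND_def tt_def take_Suc_conv_app_nth)

lemma st_split: "st e = (Lst e, Sv e, Cst e)"
  by (simp add: Lst_def Sv_def Cst_def)

lemma step_notrig: "e < ND \<Longrightarrow> \<not> trig e \<Longrightarrow> st (Suc e) = st e"
  using st_Suc[of e] st_split[of e] by (simp add: alg_step_simp trig_def)

lemma step_trig: assumes "e < ND" "trig e"
  shows "Lst (Suc e) = move_to_front (X e) (Lst e)"
    "Sv (Suc e) = Sv e \<union> {k \<in> Pset rs (Sv e) (tt e). pos (Lst e) (elem (rs!k)) \<le> JJ e}"
    "Cst (Suc e) = Cst e + JJ e + (II e - 1)"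
  using st_Suc[OF assms(1)] st_split[of e] st_split[of "Suc e"] assms(2)
  by (simp_all add: alg_step_simp trig_def X_def JJ_def II_def)

lemma tt_less: "e < e' \<Longrightarrow> e' < ND \<Longrightarrow> tt e < tt e'"
proof -
  assume a: "e < e'" "e' < ND"
  have "sorted_wrt (<) DD" unfolding DD_def deadlines_def
    by (rule strict_sorted_list_of_set)
  then show ?thesis using a by (simp add: tt_def ND_def sorted_wrt_iff_nth_less)
qed

lemma tt_mono: "e \<le> e' \<Longrightarrow> e' < ND \<Longrightarrow> tt e \<le> tt e'"
  using tt_less[of e e'] by (cases "e = e'") auto

lemma Sv_Suc_mono: "e < ND \<Longrightarrow> Sv e \<subseteq> Sv (Suc e)"
  using step_trig(2)[of e] step_notrig[of e] st_split[of e] st_split[of "Suc e"]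
  by (cases "trig e") auto

lemma Sv_mono: "e \<le> e' \<Longrightarrow> e' \<le> ND \<Longrightarrow> Sv e \<subseteq> Sv e'"
proof (induction e' rule: dec_induct)
  case base then show ?case by simp
next
  case (step m) then show ?case using Sv_Suc_mono[of m] by auto
qed

lemma invL: "e \<le> ND \<Longrightarrow> distinct (Lst e) \<and> set (Lst e) = set L0"
proof (induction e)
  case 0 then show ?case using st0 st_split[of 0] dL0 by simp
next
  case (Suc e)
  then have IH: "distinct (Lst e)" "set (Lst e) = set L0" and e: "e < ND" by auto
  show ?case
  proof (cases "trig e")
    case False then show ?thesis using step_notrig[OF e] st_split[of e] st_split[of "Suc e"] IH by simp
  next
    case True
    let ?T = "Tset rs (Sv e) (tt e)"
    have fT: "finite ?T" by (simp add: Tset_def Pset_def)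
    have "II e \<in> (\<lambda>k. pos (Lst e) (elem (rs ! k))) ` ?T"
      unfolding II_def Ival_def using True fT by (simp add: trig_def)
    then obtain k where k: "k \<in> ?T" "pos (Lst e) (elem (rs!k)) = II e" by auto
    have "elem (rs!k) \<in> set (Lst e)" using k(1) elem_in IH by (simp add: Tset_def Pset_def)
    then have "X e = elem (rs!k)" unfolding X_def using nth_pos k(2) by metis
    then have "X e \<in> set (Lst e)" using \<open>elem (rs!k) \<in> set (Lst e)\<close> by simp
    then show ?thesis using step_trig(1)[OF e True] IH set_mtf[OF \<open>X e \<in> set (Lst e)\<close>] distinct_mtf[OF IH(1)] by simp
  qed
qed

lemma nL: "e \<le> ND \<Longrightarrow> length (Lst e) = length L0"
  using invL[of e] dL0 by (metis distinct_card)

lemma trig_facts: assumes e: "e < ND" and tr: "trig e"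
  shows "kk e < length rs" "kk e \<notin> Sv e" "arr (rs ! kk e) \<le> tt e" "dl (rs ! kk e) = tt e"
    "elem (rs ! kk e) = X e" "X e \<in> set L0" "pos (Lst e) (X e) = II e"
    "1 \<le> II e" "II e \<le> length L0" "kk e \<in> Sv (Suc e)"
proof -
  let ?T = "Tset rs (Sv e) (tt e)"
  have IH: "distinct (Lst e)" "set (Lst e) = set L0" using invL[of e] e by auto
  have fT: "finite ?T" by (simp add: Tset_def Pset_def)
  have "II e \<in> (\<lambda>k. pos (Lst e) (elem (rs ! k))) ` ?T"
    unfolding II_def Ival_def using tr fT by (simp add: trig_def)
  then have ex: "\<exists>k. k \<in> ?T \<and> pos (Lst e) (elem (rs!k)) = II e" by auto
  have k: "kk e \<in> ?T" "pos (Lst e) (elem (rs!kk e)) = II e"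
    using someI_ex[OF ex] by (simp_all add: kk_def)
  show a: "kk e < length rs" "kk e \<notin> Sv e" "arr (rs ! kk e) \<le> tt e" "dl (rs ! kk e) = tt e"
    using k(1) by (auto simp: Tset_def Pset_def)
  have inL: "elem (rs!kk e) \<in> set (Lst e)" using a(1) elem_in IH by simp
  show x: "elem (rs ! kk e) = X e" unfolding X_def using nth_pos[OF inL] k(2) by simp
  show "X e \<in> set L0" using inL x IH by simp
  show p: "pos (Lst e) (X e) = II e" using k(2) x by simp
  show "1 \<le> II e" using pos_ge1 p by metis
  show "II e \<le> length L0" using pos_le[OF inL] x p nL[of e] e by simp
  have "kk e \<in> Pset rs (Sv e) (tt e)" using k(1) by (simp add: Tset_def)
  moreover have "pos (Lst e) (elem (rs!kk e)) \<le> JJ e" using k(2) pos_le[OF inL] IH nL[of e] e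
    by (simp add: JJ_def Jval_def)
  ultimately show "kk e \<in> Sv (Suc e)" using step_trig(2)[OF e tr] by simp
qed

text \<open>An unserved request that was pending at trigger e lies beyond JJ e.\<close>
lemma unserved_far: assumes e: "e < ND" and tr: "trig e" and ee': "e < e'" "e' \<le> ND"
  and k: "k < length rs" "arr (rs!k) \<le> tt e" "k \<notin> Sv e'"
  shows "2 * II e \<le> pos (Lst e) (elem (rs!k))" "elem (rs!k) \<noteq> X e"
proof -
  have "k \<notin> Sv (Suc e)" using Sv_mono[of "Suc e" e'] ee' k by auto
  moreover have "k \<in> Pset rs (Sv e) (tt e)" using k Sv_mono[of e e'] ee' by (auto simp: Pset_def)
  ultimately have gt: "JJ e < pos (Lst e) (elem (rs!k))" using step_trig(2)[OF e tr] by auto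
  have inL: "elem (rs!k) \<in> set (Lst e)" using elem_in[OF k(1)] invL[of e] e by simp
  have le: "pos (Lst e) (elem (rs!k)) \<le> length L0" using pos_le[OF inL] nL[of e] e by simp
  show "2 * II e \<le> pos (Lst e) (elem (rs!k))" using gt le nL[of e] e by (simp add: JJ_def Jval_def)
  show "elem (rs!k) \<noteq> X e" using gt trig_facts(7,8)[OF e tr] le nL[of e] e
    by (auto simp: JJ_def Jval_def)
qed

lemma pos_nondec: assumes "e \<le> e''" "e'' < e'" "e' \<le> ND"
  and k: "k < length rs" "arr (rs!k) \<le> tt e" "k \<notin> Sv e'"
  shows "pos (Lst e'') (elem (rs!k)) \<le> pos (Lst (Suc e'')) (elem (rs!k))"
proof (cases "trig e''")
  case False
  then show ?thesis using step_notrig[of e''] st_split[of e''] st_split[of "Suc e''"] assms by simp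
next
  case True
  have e'': "e'' < ND" using assms by simp
  have "arr (rs!k) \<le> tt e''" using k(2) tt_mono[of e e''] assms by simp
  then have ne: "elem (rs!k) \<noteq> X e''"
    using unserved_far(2)[OF e'' True, of e' k] assms by simp
  show ?thesis using step_trig(1)[OF e'' True] pos_mtf_ge[of "Lst e''" "elem (rs!k)" "X e''"]
      invL[of e''] e'' ne elem_in[OF k(1)] trig_facts(6)[OF e'' True] by simp
qed

lemma pos_nondec2: assumes "e \<le> e1" "e1 \<le> e'" "e' \<le> ND"
  and k: "k < length rs" "arr (rs!k) \<le> tt e" "k \<notin> Sv e'"
  shows "pos (Lst e) (elem (rs!k)) \<le> pos (Lst e1) (elem (rs!k))"
  using assms(1)
proof (induction e1 rule: dec_induct)
  case base then show ?case by simp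
next
  case (step m)
  then show ?case using pos_nondec[of e m e' k] assms by simp
qed

lemma doubling_ALG: assumes e: "e < e'" "e' < ND" and tr: "trig e" "trig e'"
  and a: "arr (rs ! kk e') \<le> tt e"
  shows "2 * II e \<le> II e'"
proof -
  have e0: "e < ND" using e by simp
  note f = trig_facts[OF e(2) tr(2)]
  have "2 * II e \<le> pos (Lst e) (elem (rs ! kk e'))"
    using unserved_far(1)[OF e0 tr(1) e(1), of "kk e'"] f a e by simp
  also have "\<dots> \<le> pos (Lst e') (elem (rs ! kk e'))"
    using pos_nondec2[of e e' e' "kk e'"] f a e by simp
  also have "\<dots> = II e'" using f by simp
  finally show ?thesis .
qed

lemma disjoint_ALG: assumes e: "e < e'" "e' < ND" and tr: "trig e" "trig e'"
  and x: "X e = X e'"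
  shows "tt e < arr (rs ! kk e')"
proof (rule ccontr)
  assume "\<not> tt e < arr (rs ! kk e')"
  then have a: "arr (rs ! kk e') \<le> tt e" by simp
  have e0: "e < ND" using e by simp
  note f = trig_facts[OF e(2) tr(2)]
  have "elem (rs ! kk e') \<noteq> X e" using unserved_far(2)[OF e0 tr(1) e(1), of "kk e'"] f a e by simp
  then show False using f x by simp
qed

end

lemma takeWhile_sorted_iff:
  "sorted (map f xs) \<Longrightarrow> (r < length (takeWhile (\<lambda>x. f x \<le> t) xs)) \<longleftrightarrow> (r < length xs \<and> f (xs!r) \<le> t)"
proof (induction xs arbitrary: r)
  case Nil then show ?case by simp
next
  case (Cons a xs)
  have s: "sorted (map f xs)" and ge: "\<forall>y\<in>set xs. f a \<le> f y" using Cons.prems by auto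
  show ?case
  proof (cases "f a \<le> t")
    case True
    then show ?thesis using Cons.IH[OF s] by (cases r) auto
  next
    case False
    have "\<not> f ((a#xs)!r) \<le> t" if "r < length (a#xs)"
    proof (cases r)
      case 0 then show ?thesis using False by simp
    next
      case (Suc r')
      then have "xs!r' \<in> set xs" using that by simp
      then have "f a \<le> f (xs!r')" using ge by blast
      then show ?thesis using False Suc by simp
    qed
    then show ?thesis using False by auto
  qed
qed

lemma apply_swap: "apply_action L (Swap j) = swp L j" by (simp add: swp_def)

locale withS = setting +
  fixes S :: schedule
  assumes feas: "feasible L0 rs S"
begin

definition "M q = state_before L0 S q"
definition "sw q \<longleftrightarrow> q < length S \<and> (\<exists>j. snd (S!q) = Swap j)"
definition "swb q = card {r. r < q \<and> sw r}"
definition "back q x \<longleftrightarrow> q < length S \<and> (\<exists>j. snd (S!q) = Swap j \<and> M q ! (j-1) = x)"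
definition "dep q = (case snd (S!q) of Access i \<Rightarrow> i | Swap _ \<Rightarrow> 0)"
definition "mm e = length (takeWhile (\<lambda>ev. fst ev \<le> tt e) S)"

lemma sortedS: "sorted (map fst S)" using feas by (simp add: feasible_def)
lemma validS: "q < length S \<Longrightarrow> valid_action (length L0) (snd (S!q))"
  using feas nth_mem by (fastforce simp: feasible_def)

lemma M0: "M 0 = L0" by (simp add: M_def state_before_def)

lemma M_Suc: "q < length S \<Longrightarrow> M (Suc q) = apply_action (M q) (snd (S!q))"
  by (simp add: M_def state_before_def take_Suc_conv_app_nth)

lemma M_ge: "length S \<le> q \<Longrightarrow> M (Suc q) = M q"
  by (simp add: M_def state_before_def)

lemma invM: "distinct (M q) \<and> set (M q) = set L0 \<and> length (M q) = length L0"
proof (induction q)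
  case 0 then show ?case using M0 dL0 by simp
next
  case (Suc q)
  show ?case
  proof (cases "q < length S")
    case False then show ?thesis using M_ge[of q] Suc by simp
  next
    case True
    note v = validS[OF True]
    show ?thesis
    proof (cases "snd (S!q)")
      case (Access i) then show ?thesis using M_Suc[OF True] Suc by simp
    next
      case (Swap j)
      then have j: "1 \<le> j" "j < length L0" using v by auto
      have "M (Suc q) = swp (M q) j" using M_Suc[OF True] Swap apply_swap by simp
      then show ?thesis using Suc j by (simp add: swp_def set_swap distinct_swap)
    qed
  qed
qed

lemma swb_Suc: "swb (Suc q) = swb q + (if sw q then 1 else 0)"
proof -
  have "{r. r < Suc q \<and> sw r} = {r. r < q \<and> sw r} \<union> (if sw q then {q} else {})"
    by (auto simp: less_Suc_eq)
  then show ?thesis by (simp add: swb_def)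
qed

lemma swb_le: "swb q \<le> swb (length S)"
  unfolding swb_def by (rule card_mono) (auto simp: sw_def)

lemma inv_M_step: assumes "set L = set L0"
  shows "ninv L (M (Suc q)) \<le> ninv L (M q) + 2 * (if sw q then 1 else 0)"
proof (cases "sw q")
  case True
  then obtain j where q: "q < length S" "snd (S!q) = Swap j" by (auto simp: sw_def)
  then have j: "1 \<le> j" "j < length L0" using validS[OF q(1)] by auto
  have "M (Suc q) = swp (M q) j" using M_Suc[OF q(1)] q apply_swap by simp
  then show ?thesis using inv_swp[of "M q" j L] invM[of q] j assms True by simp
next
  case False
  have "M (Suc q) = M q"
  proof (cases "q < length S")
    case True
    then obtain i where "snd (S!q) = Access i" using False by (cases "snd (S!q)") (auto simp: sw_def)
    then show ?thesis using M_Suc[OF True] by simp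
  next
    case F: False then show ?thesis using M_ge by simp
  qed
  then show ?thesis using False by simp
qed

lemma inv_M_mono: assumes "set L = set L0" "q \<le> q'"
  shows "ninv L (M q') + 2 * swb q \<le> ninv L (M q) + 2 * swb q'"
  using assms(2)
proof (induction q' rule: dec_induct)
  case base then show ?case by simp
next
  case (step m)
  then show ?case using inv_M_step[OF assms(1), of m] swb_Suc[of m] by simp
qed

lemma pos_M_step: assumes "x \<in> set L0"
  shows "pos (M (Suc q)) x \<le> pos (M q) x + (if back q x then 1 else 0)"
proof (cases "q < length S")
  case False then show ?thesis using M_ge[of q] by simp
next
  case True
  note v = validS[OF True]
  show ?thesis
  proof (cases "snd (S!q)")
    case (Access i) then show ?thesis using M_Suc[OF True] by simp
  next
    case (Swap j)
    then have j: "1 \<le> j" "j < length L0" using v by auto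
    have eq: "M (Suc q) = swp (M q) j" using M_Suc[OF True] Swap apply_swap by simp
    have I: "distinct (M q)" "set (M q) = set L0" "length (M q) = length L0" using invM by auto
    have xM: "x \<in> set (M q)" using assms I by simp
    have ps: "pos (swp (M q) j) x = (if x = M q!(j-1) then j+1 else if x = M q!j then j else pos (M q) x)"
      using pos_swp[OF I(1) j(1) _ xM] j I by simp
    have pa: "pos (M q) (M q ! (j-1)) = j" using pos_nth[OF I(1), of "j-1"] j I by simp
    have pb: "pos (M q) (M q ! j) = j+1" using pos_nth[OF I(1), of "j"] j I by simp
    show ?thesis
    proof (cases "x = M q ! (j-1)")
      case True
      then have "back q x" using True Swap by (simp add: back_def \<open>q < length S\<close>)
      then show ?thesis using eq ps True pa by simp
    next
      case False
      then show ?thesis using eq ps pb by auto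
    qed
  qed
qed

lemma pos_M_mono: assumes "x \<in> set L0" "q \<le> q'"
  shows "pos (M q') x \<le> pos (M q) x + card {r. q \<le> r \<and> r < q' \<and> back r x}"
  using assms(2)
proof (induction q' rule: dec_induct)
  case base then show ?case by simp
next
  case (step m)
  have "{r. q \<le> r \<and> r < Suc m \<and> back r x} = {r. q \<le> r \<and> r < m \<and> back r x} \<union> (if back m x then {m} else {})"
    using step(1) by (auto simp: less_Suc_eq)
  then have "card {r. q \<le> r \<and> r < Suc m \<and> back r x} = card {r. q \<le> r \<and> r < m \<and> back r x} + (if back m x then 1 else 0)"
    by simp
  then show ?case using step(3) pos_M_step[OF assms(1), of m] by simp
qed

lemma mm_iff: "r < mm e \<longleftrightarrow> r < length S \<and> fst (S!r) \<le> tt e"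
  unfolding mm_def using takeWhile_sorted_iff[OF sortedS] by simp

lemma mm_le: "mm e \<le> length S" unfolding mm_def by (rule length_takeWhile_le)

lemma mm_mono: assumes "e \<le> e'" "e' < ND" shows "mm e \<le> mm e'"
proof (rule ccontr)
  assume "\<not> mm e \<le> mm e'"
  then have "mm e' < mm e" by simp
  then have "mm e' < length S" "fst (S ! mm e') \<le> tt e" using mm_iff by auto
  moreover have "fst (S ! mm e') \<le> tt e'" using calculation tt_mono[OF assms] by linarith
  ultimately have "mm e' < mm e'" using mm_iff[of "mm e'" e'] by blast
  then show False by simp
qed

definition "jj e = (SOME j. j < length S \<and> (\<exists>i. snd (S!j) = Access i \<and>
     arr (rs ! kk e) \<le> fst (S!j) \<and> fst (S!j) \<le> dl (rs ! kk e) \<and> pos (M j) (elem (rs ! kk e)) \<le> i))"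

lemma jj_facts: assumes e: "e < ND" and tr: "trig e"
  shows "jj e < length S" "snd (S ! jj e) = Access (dep (jj e))"
    "arr (rs ! kk e) \<le> fst (S ! jj e)" "fst (S ! jj e) \<le> tt e"
    "pos (M (jj e)) (X e) \<le> dep (jj e)" "jj e < mm e"
proof -
  note f = trig_facts[OF e tr]
  have "\<exists>j. j < length S \<and> (\<exists>i. snd (S!j) = Access i \<and>
     arr (rs ! kk e) \<le> fst (S!j) \<and> fst (S!j) \<le> dl (rs ! kk e) \<and> pos (M j) (elem (rs ! kk e)) \<le> i)"
    using feas f(1) by (auto simp: feasible_def M_def)
  from someI_ex[OF this] obtain i where j: "jj e < length S" "snd (S!jj e) = Access i"
     "arr (rs ! kk e) \<le> fst (S!jj e)" "fst (S!jj e) \<le> dl (rs ! kk e)" "pos (M (jj e)) (elem (rs ! kk e)) \<le> i"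
    unfolding jj_def[symmetric] by blast
  have d: "dep (jj e) = i" using j(2) by (simp add: dep_def)
  show "jj e < length S" "snd (S ! jj e) = Access (dep (jj e))"
    "arr (rs ! kk e) \<le> fst (S ! jj e)" "fst (S ! jj e) \<le> tt e" "pos (M (jj e)) (X e) \<le> dep (jj e)"
    using j d f(4) f(5) by auto
  show "jj e < mm e" using mm_iff[of "jj e" e] j(1) j(4) f(4) by simp
qed

end

context withS
begin

definition "Bv e = (if trig e then min (8 * real (II e)) (10 * real (pos (M (mm e)) (X e)) - 2 * real (II e)) else 0)"
definition "mq e = (if e = 0 then 0 else mm (e - 1))"

lemma step_bound: assumes e: "e < ND"
  shows "real (Cst (Suc e)) + 5 * real (ninv (Lst (Suc e)) (M (mm e)))
         \<le> real (Cst e) + 5 * real (ninv (Lst e) (M (mm e))) + Bv e"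
proof (cases "trig e")
  case False
  then show ?thesis using step_notrig[OF e] st_split[of e] st_split[of "Suc e"] by (simp add: Bv_def)
next
  case True
  note f = trig_facts[OF e True]
  have IL: "distinct (Lst e)" "set (Lst e) = set L0" using invL[of e] e by auto
  have IM: "distinct (M (mm e))" "set (M (mm e)) = set L0" using invM by auto
  have xL: "X e \<in> set (Lst e)" using f(6) IL by simp
  obtain k where k: "k \<le> pos (Lst e) (X e) - 1" "k \<le> pos (M (mm e)) (X e) - 1"
    "ninv (move_to_front (X e) (Lst e)) (M (mm e)) + (pos (Lst e) (X e) - 1) = ninv (Lst e) (M (mm e)) + 2 * k"
    using mtf_inv[OF IL(1) IM(1) _ xL] IM IL by auto
  define i where "i = II e"
  define p where "p = pos (M (mm e)) (X e)"
  define a where "a = ninv (Lst (Suc e)) (M (mm e))"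
  define b where "b = ninv (Lst e) (M (mm e))"
  have i1: "1 \<le> i" using f(8) i_def by simp
  have p1: "1 \<le> p" using pos_ge1 p_def by metis
  have eqn: "a + (i - 1) = b + 2 * k" using k(3) step_trig(1)[OF e True] f(7) by (simp add: a_def b_def i_def)
  have eqr: "real a + real i - 1 = real b + 2 * real k"
  proof -
    have "real (a + (i - 1)) = real (b + 2 * k)" using eqn by simp
    then show ?thesis using i1 by (simp add: of_nat_diff)
  qed
  have kr: "real k \<le> real i - 1" "real k \<le> real p - 1" using k f(7) i1 p1 by (auto simp: i_def p_def)
  have J: "real (JJ e) \<le> 2 * real i - 1" using i1 by (simp add: JJ_def Jval_def i_def)
  have C: "real (Cst (Suc e)) = real (Cst e) + real (JJ e) + real i - 1"
    using step_trig(3)[OF e True] i1 by (simp add: i_def of_nat_diff)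
  have h1: "real (Cst (Suc e)) + 5 * real a \<le> real (Cst e) + 5 * real b + 8 * real i"
    using eqr kr J C by linarith
  have h2: "real (Cst (Suc e)) + 5 * real a \<le> real (Cst e) + 5 * real b + (10 * real p - 2 * real i)"
    using eqr kr J C by linarith
  have "Bv e = min (8 * real i) (10 * real p - 2 * real i)" using True by (simp add: Bv_def i_def p_def)
  then show ?thesis using h1 h2 unfolding a_def b_def by (cases "8 * real i \<le> 10 * real p - 2 * real i") (simp_all add: min_def)
qed

lemma mq_le: "e < ND \<Longrightarrow> mq e \<le> mm e"
  using mm_mono[of "e - 1" e] by (simp add: mq_def)

lemma potential: "e \<le> ND \<Longrightarrow>
  real (Cst e) + 5 * real (ninv (Lst e) (M (mq e))) \<le> (\<Sum>e'<e. Bv e') + 10 * real (swb (mq e))"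
proof (induction e)
  case 0
  have "Cst 0 = 0" "Lst 0 = L0" using st0 st_split[of 0] by auto
  then have "ninv (Lst 0) (M (mq 0)) = 0" using M0 inv_self[of L0] by (simp add: mq_def)
  then show ?case using \<open>Cst 0 = 0\<close> by simp
next
  case (Suc e)
  then have e: "e < ND" by simp
  have IH: "real (Cst e) + 5 * real (ninv (Lst e) (M (mq e))) \<le> (\<Sum>e'<e. Bv e') + 10 * real (swb (mq e))"
    using Suc by simp
  have mono: "ninv (Lst e) (M (mm e)) + 2 * swb (mq e) \<le> ninv (Lst e) (M (mq e)) + 2 * swb (mm e)"
  proof -
    have sL: "set (Lst e) = set L0" using invL[of e] e by simp
    show ?thesis using inv_M_mono[OF sL mq_le[OF e]] .
  qed
  have monor: "real (ninv (Lst e) (M (mm e))) + 2 * real (swb (mq e)) \<le> real (ninv (Lst e) (M (mq e))) + 2 * real (swb (mm e))"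
  proof -
    have "real (ninv (Lst e) (M (mm e)) + 2 * swb (mq e)) \<le> real (ninv (Lst e) (M (mq e)) + 2 * swb (mm e))"
      using mono by (simp only: of_nat_le_iff)
    then show ?thesis by simp
  qed
  have "mq (Suc e) = mm e" by (simp add: mq_def)
  then show ?case using step_bound[OF e] IH monor by simp
qed

lemma ALG_bound1: "real (ALG L0 rs) \<le> (\<Sum>e<ND. Bv e) + 10 * real (swb (length S))"
proof -
  have "real (Cst ND) \<le> (\<Sum>e<ND. Bv e) + 10 * real (swb (mq ND))"
    using potential[of ND] by simp
  moreover have "swb (mq ND) \<le> swb (length S)" by (rule swb_le)
  ultimately show ?thesis using ALG_eq by simp
qed

definition "Tr = {e. e < ND \<and> trig e}"
definition "del e = card {r. jj e \<le> r \<and> r < mm e \<and> back r (X e)}"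

lemma finite_Tr: "finite Tr" by (simp add: Tr_def)

lemma Bv_bound: assumes "e \<in> Tr"
  shows "Bv e \<le> hh (real (dep (jj e))) (real (II e)) + 10 * real (del e)"
proof -
  have e: "e < ND" "trig e" using assms by (auto simp: Tr_def)
  note j = jj_facts[OF e]
  note f = trig_facts[OF e]
  have "pos (M (mm e)) (X e) \<le> pos (M (jj e)) (X e) + del e"
    using pos_M_mono[OF f(6), of "jj e" "mm e"] j(6) by (simp add: del_def)
  then have "pos (M (mm e)) (X e) \<le> dep (jj e) + del e" using j(5) by simp
  then have p: "real (pos (M (mm e)) (X e)) \<le> real (dep (jj e)) + real (del e)" by simp
  show ?thesis using e(2) p unfolding Bv_def hh_def
    by (simp add: min_def)
qed

lemma sum_Bv: "(\<Sum>e<ND. Bv e) = (\<Sum>e\<in>Tr. Bv e)"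
proof -
  have "(\<Sum>e\<in>Tr. Bv e) = (\<Sum>e\<in>{e \<in> {..<ND}. trig e}. Bv e)" by (simp add: Tr_def)
  also have "\<dots> = (\<Sum>e<ND. if trig e then Bv e else 0)" by (rule sum.inter_filter) simp
  also have "\<dots> = (\<Sum>e<ND. Bv e)" by (rule sum.cong) (auto simp: Bv_def)
  finally show ?thesis by simp
qed

end

context withS
begin

definition "W e = {r. jj e \<le> r \<and> r < mm e \<and> back r (X e)}"

lemma no_overlap: assumes "e \<in> Tr" "e' \<in> Tr" "e < e'" "X e = X e'" "r \<in> W e" "r \<in> W e'"
  shows False
proof -
  have e: "e < ND" "trig e" "e' < ND" "trig e'" using assms by (auto simp: Tr_def)
  have a: "tt e < arr (rs ! kk e')" using disjoint_ALG[OF assms(3) e(3) e(2) e(4) assms(4)] .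
  have b: "arr (rs ! kk e') \<le> fst (S ! jj e')" using jj_facts(3)[OF e(3,4)] .
  have r: "jj e' \<le> r" "r < mm e" using assms(5,6) by (auto simp: W_def)
  have rl: "r < length S" "fst (S!r) \<le> tt e" using mm_iff[of r e] r(2) by auto
  have "fst (S ! jj e') \<le> fst (S ! r)"
    using sorted_nth_mono[OF sortedS r(1)] rl(1) jj_facts(1)[OF e(3,4)] by simp
  then show False using a b rl(2) by simp
qed

lemma sum_del: "(\<Sum>e\<in>Tr. real (del e)) \<le> real (swb (length S))"
proof -
  have fW: "\<forall>e\<in>Tr. finite (W e)" by (auto simp: W_def)
  have "(\<Sum>e\<in>Tr. del e) = card (SIGMA e:Tr. W e)"
    using card_SigmaI[OF finite_Tr fW] by (simp add: del_def W_def)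
  also have "\<dots> = card (snd ` (SIGMA e:Tr. W e))"
  proof (rule card_image[symmetric], rule inj_onI)
    fix p1 p2 assume p1: "p1 \<in> (SIGMA e:Tr. W e)" and p2: "p2 \<in> (SIGMA e:Tr. W e)" and s: "snd p1 = snd p2"
    obtain e r where pe: "p1 = (e, r)" by force
    obtain e' r' where pe': "p2 = (e', r')" by force
    have m: "e \<in> Tr" "r \<in> W e" "e' \<in> Tr" "r \<in> W e'" using p1 p2 pe pe' s by auto
    have "back r (X e)" "back r (X e')" using m by (auto simp: W_def)
    then have x: "X e = X e'" by (auto simp: back_def)
    have "e = e'"
    proof (rule linorder_cases[of e e'])
      assume "e < e'" then show ?thesis using no_overlap[OF m(1) m(3) _ x m(2) m(4)] by simp
    next
      assume "e' < e" then show ?thesis using no_overlap[OF m(3) m(1) _ x[symmetric] m(4) m(2)] by simp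
    qed
    then show "p1 = p2" using pe pe' s by simp
  qed
  also have "\<dots> \<le> card {r. r < length S \<and> sw r}"
  proof (rule card_mono)
    show "finite {r. r < length S \<and> sw r}" by simp
    show "snd ` (SIGMA e:Tr. W e) \<subseteq> {r. r < length S \<and> sw r}"
      by (auto simp: W_def back_def sw_def)
  qed
  finally have "(\<Sum>e\<in>Tr. del e) \<le> swb (length S)" by (simp add: swb_def)
  then show ?thesis by (metis of_nat_le_iff of_nat_sum)
qed

lemma group_bound: assumes q: "q < length S"
  shows "(\<Sum>e\<in>{x. x \<in> Tr \<and> jj x = q}. hh (real (dep (jj e))) (real (II e))) \<le> 24 * real (dep q)"
proof -
  let ?G = "{x. x \<in> Tr \<and> jj x = q}"
  have "(\<Sum>e\<in>?G. hh (real (dep (jj e))) (real (II e))) = (\<Sum>e\<in>?G. hh (real (dep q)) (real (II e)))"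
    by (rule sum.cong) auto
  also have "\<dots> \<le> Sb (real (dep q)) (real (length L0))"
  proof (rule doubling_sum)
    show "finite ?G" using finite_Tr by simp
    show "2 * real (II e) \<le> real (II e')" if "e \<in> ?G" "e' \<in> ?G" "e < e'" for e e'
    proof -
      have t: "e < ND" "trig e" "e' < ND" "trig e'" "jj e = q" "jj e' = q" using that by (auto simp: Tr_def)
      have "arr (rs ! kk e') \<le> fst (S ! jj e')" using jj_facts(3)[OF t(3,4)] .
      also have "\<dots> = fst (S ! jj e)" using t by simp
      also have "\<dots> \<le> tt e" using jj_facts(4)[OF t(1,2)] .
      finally have "2 * II e \<le> II e'" using doubling_ALG[OF that(3) t(3) t(2) t(4)] by simp
      then show ?thesis by simp
    qed
    show "\<And>e. e \<in> ?G \<Longrightarrow> 0 \<le> real (II e)" by simp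
    show "real (II e) \<le> real (length L0)" if "e \<in> ?G" for e
      using trig_facts(9)[of e] that by (simp add: Tr_def)
    show "0 \<le> real (length L0)" by simp
    show "0 \<le> real (dep q)" by simp
  qed
  also have "\<dots> \<le> 24 * real (dep q)" by (rule Sb_le24)
  finally show ?thesis .
qed

lemma sum_hh: "(\<Sum>e\<in>Tr. hh (real (dep (jj e))) (real (II e))) \<le> 24 * (\<Sum>q<length S. real (dep q))"
proof -
  have sub: "jj ` Tr \<subseteq> {..<length S}" using jj_facts(1) by (auto simp: Tr_def)
  have "(\<Sum>e\<in>Tr. hh (real (dep (jj e))) (real (II e)))
      = (\<Sum>q<length S. \<Sum>e\<in>{x. x \<in> Tr \<and> jj x = q}. hh (real (dep (jj e))) (real (II e)))"
    using sum.group[OF finite_Tr _ sub, of "\<lambda>e. hh (real (dep (jj e))) (real (II e))"] by simp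
  also have "\<dots> \<le> (\<Sum>q<length S. 24 * real (dep q))"
    by (rule sum_mono) (use group_bound in simp)
  also have "\<dots> = 24 * (\<Sum>q<length S. real (dep q))" by (simp add: sum_distrib_left)
  finally show ?thesis .
qed

lemma cost_eq: "real (sched_cost S) = (\<Sum>q<length S. real (dep q)) + real (swb (length S))"
proof -
  have "sched_cost S = (\<Sum>q<length S. action_cost (snd (S!q)))"
    unfolding sched_cost_def sum_list_sum_nth by (simp add: atLeast0LessThan)
  then have "real (sched_cost S) = (\<Sum>q<length S. real (action_cost (snd (S!q))))" by simp
  also have "\<dots> = (\<Sum>q<length S. real (dep q) + (if sw q then 1 else 0))"
  proof (rule sum.cong)
    fix q assume "q \<in> {..<length S}"
    then show "real (action_cost (snd (S!q))) = real (dep q) + (if sw q then 1 else 0)"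
      by (cases "snd (S!q)") (auto simp: dep_def sw_def)
  qed simp
  also have "\<dots> = (\<Sum>q<length S. real (dep q)) + (\<Sum>q<length S. if sw q then 1 else 0)"
    by (simp add: sum.distrib)
  also have "(\<Sum>q<length S. if sw q then 1 else (0::real)) = real (swb (length S))"
  proof -
    have "(\<Sum>q<length S. if sw q then 1 else (0::real)) = (\<Sum>q\<in>{q \<in> {..<length S}. sw q}. 1)"
      using sum.inter_filter[of "{..<length S}" "\<lambda>_. 1::real" sw] by simp
    also have "{q \<in> {..<length S}. sw q} = {r. r < length S \<and> sw r}" by auto
    finally show ?thesis by (simp add: swb_def)
  qed
  finally show ?thesis .
qed

theorem ALG_le: "real (ALG L0 rs) \<le> 24 * real (sched_cost S)"
proof -
  have "(\<Sum>e\<in>Tr. Bv e) \<le> (\<Sum>e\<in>Tr. hh (real (dep (jj e))) (real (II e)) + 10 * real (del e))"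
    by (rule sum_mono) (rule Bv_bound)
  also have "\<dots> = (\<Sum>e\<in>Tr. hh (real (dep (jj e))) (real (II e))) + 10 * (\<Sum>e\<in>Tr. real (del e))"
    by (simp add: sum.distrib sum_distrib_left)
  finally have "(\<Sum>e\<in>Tr. Bv e) \<le> 24 * (\<Sum>q<length S. real (dep q)) + 10 * real (swb (length S))"
    using sum_hh sum_del by linarith
  then show ?thesis using ALG_bound1 sum_Bv cost_eq by simp
qed

end

lemma foldl_access: "\<forall>a\<in>set as. \<exists>i. a = Access i \<Longrightarrow> foldl apply_action L as = L"
  by (induction as) auto

theorem theorem1:
  fixes L0 :: "'a list" and rs :: "'a request list"
  assumes "distinct L0"
      and "\<forall>r \<in> set rs. elem r \<in> set L0 \<and> arr r \<le> dl r"
  shows "ALG L0 rs \<le> 24 * OPT L0 rs"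
proof (cases "rs = []")
  case True
  then show ?thesis by (simp add: ALG_def deadlines_def)
next
  case False
  interpret setting L0 rs using assms by unfold_locales
  define S0 :: schedule where "S0 = map (\<lambda>t. (t, Access (length L0))) (deadlines rs)"
  have n1: "1 \<le> length L0"
  proof -
    have "elem (rs!0) \<in> set L0" using elem_in False by simp
    then show ?thesis by (cases L0) auto
  qed
  have feas0: "feasible L0 rs S0"
    unfolding feasible_def
  proof (intro conjI ballI allI impI)
    show "sorted (map fst S0)" by (simp add: S0_def comp_def deadlines_def)
    show "valid_action (length L0) (snd ev)" if "ev \<in> set S0" for ev
      using that n1 by (auto simp: S0_def)
    fix k assume k: "k < length rs"
    have "dl (rs!k) \<in> set (deadlines rs)" using k by (simp add: deadlines_def)
    then obtain j where j: "j < length (deadlines rs)" "deadlines rs ! j = dl (rs!k)"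
      by (metis in_set_conv_nth)
    have sb: "state_before L0 S0 j = L0"
    proof -
      have "\<forall>ev\<in>set S0. \<exists>i. snd ev = Access i" by (auto simp: S0_def)
      then have "\<forall>a\<in>set (map snd (take j S0)). \<exists>i. a = Access i"
        using set_take_subset[of j S0] by fastforce
      then show ?thesis unfolding state_before_def by (rule foldl_access)
    qed
    have "elem (rs!k) \<in> set L0" using elem_in[OF k] .
    then have p: "pos L0 (elem (rs!k)) \<le> length L0" by (rule pos_le)
    have a: "arr (rs!k) \<le> dl (rs!k)" using assms(2) k nth_mem by blast
    show "\<exists>j<length S0. \<exists>i. snd (S0 ! j) = Access i \<and> arr (rs ! k) \<le> fst (S0 ! j) \<and>
            fst (S0 ! j) \<le> dl (rs ! k) \<and> pos (state_before L0 S0 j) (elem (rs ! k)) \<le> i"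
      using j sb p a by (auto simp: S0_def)
  qed
  let ?C = "{sched_cost S |S. feasible L0 rs S}"
  have "?C \<noteq> {}" using feas0 by auto
  then have "OPT L0 rs \<in> ?C" unfolding OPT_def by (rule Inf_nat_def1)
  then obtain S where S: "feasible L0 rs S" "OPT L0 rs = sched_cost S" by auto
  interpret withS L0 rs S using S(1) by unfold_locales
  have "real (ALG L0 rs) \<le> real (24 * sched_cost S)" using ALG_le by simp
  then show ?thesis using S(2) by (simp only: of_nat_le_iff)
qed

end
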